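(* Let $a<b$ be integers. Then there is a non-split short exact sequence in $\mathcal{C}_2$ \[ 0\to(-\infty,b)\xrightarrow{f}(a,b)\xrightarrow{g}(-\infty,a)\to0. \]
   Context: Let $R=\mathbb{C}[x,y]/(x^2)$, graded with $\deg x=1$, $\deg y=-1$; $M(j)_n=M_{j+n}$. $\mathcal{C}_2$ is the exact category of finitely generated $\mathbb{Z}$-graded maximal Cohen–Macaulay $R$-modules with degree-preserving morphisms. An arc is a pair $(a,b)$ with $a\in\mathbb{Z}\cup\{-\infty\}$, $b\in\mathbb{Z}$, $a<b$; a finite arc $(a,b)$ ($a\in\mathbb{Z}$) denotes the module $(x,y^{b-a-1})(1-b)$ (where $(x,y^0)=R$), and an infinite arc $(-\infty,b)$ denotes $\mathbb{C}[y](-b)=(R/(x))(-b)$. *)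

theory Defs
  imports Complex_Main "HOL-Computational_Algebra.Polynomial"
begin

text \<open>Elements of R = C[x,y]/(x^2) are written p(y) + x q(y), encoded as pairs (p,q).\<close>
type_synonym relt = "complex poly \<times> complex poly"

definition radd :: "relt \<Rightarrow> relt \<Rightarrow> relt" where
  "radd r s = (fst r + fst s, snd r + snd s)"

definition rmult :: "relt \<Rightarrow> relt \<Rightarrow> relt" where
  "rmult r s = (fst r * fst s, fst r * snd s + snd r * fst s)"

text \<open>Homogeneous part of R of degree m (deg x = 1, deg y = -1):
  spanned by y^(-m) (if m \<le> 0) and x y^(1-m) (if m \<le> 1).\<close>
definition rdeg_part :: "int \<Rightarrow> relt set" where
  "rdeg_part m = {(p, q).
     (\<exists>c. p = (if m \<le> 0 then monom c (nat (- m)) else 0)) \<and>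
     (\<exists>c. q = (if m \<le> 1 then monom c (nat (1 - m)) else 0))}"

text \<open>A concrete graded R-module: carrier (with addition radd, zero (0,0)),
  R-action, and homogeneous components.\<close>
record gmod =
  carrier :: "relt set"
  act :: "relt \<Rightarrow> relt \<Rightarrow> relt"
  comp :: "int \<Rightarrow> relt set"

text \<open>The ideal (x, y^n) of R, shifted by j: M(j)_d = M_(j+d).\<close>
definition ideal_mod :: "nat \<Rightarrow> int \<Rightarrow> gmod" where
  "ideal_mod n j = \<lparr> carrier = {(p, q). monom 1 n dvd p},
                    act = rmult,
                    comp = (\<lambda>d. rdeg_part (j + d) \<inter> {(p, q). monom 1 n dvd p}) \<rparr>"

text \<open>C[y] = R/(x) (elements (p,0), x acts as 0), shifted by j; C[y]_m = C y^(-m) for m \<le> 0.\<close>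
definition cy_mod :: "int \<Rightarrow> gmod" where
  "cy_mod j = \<lparr> carrier = {(p, q). q = 0},
               act = (\<lambda>r m. (fst r * fst m, 0)),
               comp = (\<lambda>d. {(p, q). q = 0 \<and>
                   (\<exists>c. p = (if j + d \<le> 0 then monom c (nat (- (j + d))) else 0))}) \<rparr>"

text \<open>Finite arc (a,b) = (x, y^(b-a-1))(1-b); infinite arc (-\<infinity>,b) = C[y](-b).\<close>
definition finite_arc :: "int \<Rightarrow> int \<Rightarrow> gmod" where
  "finite_arc a b = ideal_mod (nat (b - a - 1)) (1 - b)"

definition infinite_arc :: "int \<Rightarrow> gmod" where
  "infinite_arc b = cy_mod (- b)"

definition gmod_hom :: "gmod \<Rightarrow> gmod \<Rightarrow> (relt \<Rightarrow> relt) \<Rightarrow> bool" where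
  "gmod_hom M N f \<longleftrightarrow>
     (\<forall>m\<in>carrier M. f m \<in> carrier N) \<and>
     (\<forall>m1\<in>carrier M. \<forall>m2\<in>carrier M. f (radd m1 m2) = radd (f m1) (f m2)) \<and>
     (\<forall>r. \<forall>m\<in>carrier M. f (act M r m) = act N r (f m)) \<and>
     (\<forall>d. f ` comp M d \<subseteq> comp N d)"

definition short_exact :: "gmod \<Rightarrow> gmod \<Rightarrow> gmod \<Rightarrow> (relt \<Rightarrow> relt) \<Rightarrow> (relt \<Rightarrow> relt) \<Rightarrow> bool" where
  "short_exact M N P f g \<longleftrightarrow>
     gmod_hom M N f \<and> gmod_hom N P g \<and>
     inj_on f (carrier M) \<and> g ` carrier N = carrier P \<and>
     {n \<in> carrier N. g n = (0, 0)} = f ` carrier M"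

definition ses_splits :: "gmod \<Rightarrow> gmod \<Rightarrow> (relt \<Rightarrow> relt) \<Rightarrow> bool" where
  "ses_splits N P g \<longleftrightarrow> (\<exists>s. gmod_hom P N s \<and> (\<forall>p\<in>carrier P. g (s p) = p))"

end

theory Submission
  imports Defs
begin

lemma monom_div_Y:
  fixes c :: complex
  assumes "monom 1 n dvd monom c k"
  shows "(k \<ge> n \<and> monom c k div monom 1 n = monom c (k - n)) \<or> c = 0"
proof (cases "c = 0")
  case False
  have "degree (monom 1 n :: complex poly) \<le> degree (monom c k)"
    using assms False by (intro dvd_imp_degree_le) auto
  hence kn: "n \<le> k" using False by (simp add: degree_monom_eq)
  have "monom c k = monom c (k - n) * monom 1 n"
    using kn by (simp add: mult_monom)
  hence "monom c k div monom 1 n = monom c (k - n)"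
    by (metis monom_eq_0_iff nonzero_mult_div_cancel_right one_neq_zero)
  thus ?thesis using kn by auto
qed simp

theorem lemma4p6:
  fixes a b :: int
  assumes "a < b"
  shows "\<exists>f g. short_exact (infinite_arc b) (finite_arc a b) (infinite_arc a) f g \<and>
               \<not> ses_splits (finite_arc a b) (infinite_arc a) g"
proof -
  define n where "n = nat (b - a - 1)"
  define Y where "Y = (monom 1 n :: complex poly)"
  define f where "f = (\<lambda>m::relt. ((0::complex poly), fst m))"
  define g where "g = (\<lambda>m::relt. (fst m div Y, (0::complex poly)))"
  have Ynz: "Y \<noteq> 0" unfolding Y_def by simp
  have carrN: "carrier (finite_arc a b) = {(p, q). Y dvd p}"
    unfolding finite_arc_def ideal_mod_def Y_def n_def by simp
  have carrM: "\<And>c. carrier (infinite_arc c) = {(p, q). q = 0}"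
    unfolding infinite_arc_def cy_mod_def by simp
  have actN: "act (finite_arc a b) = rmult"
    unfolding finite_arc_def ideal_mod_def by simp
  have actM: "\<And>c. act (infinite_arc c) = (\<lambda>r m. (fst r * fst m, 0))"
    unfolding infinite_arc_def cy_mod_def by simp
  have compN: "\<And>d. comp (finite_arc a b) d = rdeg_part (1 - b + d) \<inter> {(p, q). Y dvd p}"
    unfolding finite_arc_def ideal_mod_def Y_def n_def by simp
  have compM: "\<And>c d. comp (infinite_arc c) d = {(p, q). q = 0 \<and>
                   (\<exists>e. p = (if - c + d \<le> 0 then monom e (nat (- (- c + d))) else 0))}"
    unfolding infinite_arc_def cy_mod_def by simp
  have homf: "gmod_hom (infinite_arc b) (finite_arc a b) f"
    unfolding gmod_hom_def
  proof (intro conjI ballI allI)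
    fix m assume "m \<in> carrier (infinite_arc b)"
    show "f m \<in> carrier (finite_arc a b)" unfolding carrN f_def by simp
  next
    fix m1 m2 assume "m1 \<in> carrier (infinite_arc b)" "m2 \<in> carrier (infinite_arc b)"
    show "f (radd m1 m2) = radd (f m1) (f m2)" unfolding f_def radd_def by simp
  next
    fix r m assume "m \<in> carrier (infinite_arc b)"
    then show "f (act (infinite_arc b) r m) = act (finite_arc a b) r (f m)"
      unfolding f_def actN actM carrM rmult_def by auto
  next
    fix d
    show "f ` comp (infinite_arc b) d \<subseteq> comp (finite_arc a b) d"
    proof
      fix z assume "z \<in> f ` comp (infinite_arc b) d"
      then obtain p e where z: "z = (0, p)" and
        p: "p = (if - b + d \<le> 0 then monom e (nat (- (- b + d))) else 0)"
        unfolding f_def compM by auto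
      show "z \<in> comp (finite_arc a b) d"
        unfolding compN rdeg_part_def z
      proof (cases "- b + d \<le> 0")
        case True
        then show "(0, p) \<in> {(p, q). (\<exists>c. p = (if 1 - b + d \<le> 0 then monom c (nat (- (1 - b + d))) else 0)) \<and>
             (\<exists>c. q = (if 1 - b + d \<le> 1 then monom c (nat (1 - (1 - b + d))) else 0))} \<inter> {(p, q). Y dvd p}"
          using p by (auto intro: exI[of _ 0] exI[of _ e])
      next
        case False
        then show "(0, p) \<in> {(p, q). (\<exists>c. p = (if 1 - b + d \<le> 0 then monom c (nat (- (1 - b + d))) else 0)) \<and>
             (\<exists>c. q = (if 1 - b + d \<le> 1 then monom c (nat (1 - (1 - b + d))) else 0))} \<inter> {(p, q). Y dvd p}"
          using p by (auto intro: exI[of _ 0])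
      qed
    qed
  qed
  have homg: "gmod_hom (finite_arc a b) (infinite_arc a) g"
    unfolding gmod_hom_def
  proof (intro conjI ballI allI)
    fix m assume "m \<in> carrier (finite_arc a b)"
    show "g m \<in> carrier (infinite_arc a)" unfolding carrM g_def by simp
  next
    fix m1 m2 assume "m1 \<in> carrier (finite_arc a b)" "m2 \<in> carrier (finite_arc a b)"
    then show "g (radd m1 m2) = radd (g m1) (g m2)" unfolding g_def radd_def carrN
      by (auto simp: div_add)
  next
    fix r m assume "m \<in> carrier (finite_arc a b)"
    then show "g (act (finite_arc a b) r m) = act (infinite_arc a) r (g m)"
      unfolding g_def actN actM carrN rmult_def by (auto simp: div_mult_swap)
  next
    fix d
    show "g ` comp (finite_arc a b) d \<subseteq> comp (infinite_arc a) d"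
    proof
      fix z assume "z \<in> g ` comp (finite_arc a b) d"
      then obtain p e where z: "z = (p div Y, 0)" and dv: "Y dvd p" and
        p: "p = (if 1 - b + d \<le> 0 then monom e (nat (- (1 - b + d))) else 0)"
        unfolding g_def compN rdeg_part_def by auto
      show "z \<in> comp (infinite_arc a) d"
        unfolding compM z
      proof (cases "1 - b + d \<le> 0")
        case True
        then have pe: "p = monom e (nat (- (1 - b + d)))" using p by simp
        from monom_div_Y[of n e "nat (- (1 - b + d))"] dv pe
        have "(n \<le> nat (- (1 - b + d)) \<and> p div Y = monom e (nat (- (1 - b + d)) - n)) \<or> e = 0"
          unfolding Y_def by simp
        then show "(p div Y, 0) \<in> {(p, q). q = 0 \<and>
                   (\<exists>e. p = (if - a + d \<le> 0 then monom e (nat (- (- a + d))) else 0))}"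
        proof
          assume h: "n \<le> nat (- (1 - b + d)) \<and> p div Y = monom e (nat (- (1 - b + d)) - n)"
          have "- a + d \<le> 0" "nat (- (1 - b + d)) - n = nat (- (- a + d))"
            using h assms True unfolding n_def by auto
          then show ?thesis using h by auto
        next
          assume "e = 0"
          then show ?thesis using pe by (auto intro: exI[of _ 0])
        qed
      next
        case False
        then show "(p div Y, 0) \<in> {(p, q). q = 0 \<and>
                   (\<exists>e. p = (if - a + d \<le> 0 then monom e (nat (- (- a + d))) else 0))}"
          using p by (auto intro: exI[of _ 0])
      qed
    qed
  qed
  have ses: "short_exact (infinite_arc b) (finite_arc a b) (infinite_arc a) f g"
    unfolding short_exact_def
  proof (intro conjI homf homg)
    show "inj_on f (carrier (infinite_arc b))"
      unfolding inj_on_def f_def carrM by auto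
    show "g ` carrier (finite_arc a b) = carrier (infinite_arc a)"
    proof
      show "g ` carrier (finite_arc a b) \<subseteq> carrier (infinite_arc a)"
        unfolding g_def carrM by auto
      show "carrier (infinite_arc a) \<subseteq> g ` carrier (finite_arc a b)"
      proof
        fix z assume "z \<in> carrier (infinite_arc a)"
        then obtain p where z: "z = (p, 0)" unfolding carrM by auto
        have "g (p * Y, 0) = z" unfolding g_def z using Ynz by simp
        moreover have "(p * Y, 0) \<in> carrier (finite_arc a b)" unfolding carrN by simp
        ultimately show "z \<in> g ` carrier (finite_arc a b)" by (metis image_eqI)
      qed
    qed
    show "{n \<in> carrier (finite_arc a b). g n = (0, 0)} = f ` carrier (infinite_arc b)"
    proof
      show "{n \<in> carrier (finite_arc a b). g n = (0, 0)} \<subseteq> f ` carrier (infinite_arc b)"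
      proof
        fix z assume "z \<in> {n \<in> carrier (finite_arc a b). g n = (0, 0)}"
        then obtain p q where z: "z = (p, q)" and dv: "Y dvd p" and d0: "p div Y = 0"
          unfolding carrN g_def by auto
        have "p = 0" using dv d0 by (metis dvd_div_mult_self mult_zero_left)
        then have "z = f (q, 0)" unfolding f_def z by simp
        moreover have "(q, 0) \<in> carrier (infinite_arc b)" unfolding carrM by simp
        ultimately show "z \<in> f ` carrier (infinite_arc b)" by blast
      qed
      show "f ` carrier (infinite_arc b) \<subseteq> {n \<in> carrier (finite_arc a b). g n = (0, 0)}"
        unfolding f_def g_def carrN by auto
    qed
  qed
  have nsplit: "\<not> ses_splits (finite_arc a b) (infinite_arc a) g"
  proof
    assume "ses_splits (finite_arc a b) (infinite_arc a) g"
    then obtain s where hs: "gmod_hom (infinite_arc a) (finite_arc a b) s"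
      and sec: "\<forall>p\<in>carrier (infinite_arc a). g (s p) = p"
      unfolding ses_splits_def by blast
    have one: "(1, 0) \<in> carrier (infinite_arc a)" unfolding carrM by simp
    obtain P Q where sP: "s (1, 0) = (P, Q)" by fastforce
    have "(P, Q) \<in> carrier (finite_arc a b)" using hs one sP unfolding gmod_hom_def by metis
    then have dv: "Y dvd P" unfolding carrN by simp
    have "g (P, Q) = (1, 0)" using sec one sP by metis
    then have "P div Y = 1" unfolding g_def by simp
    then have PY: "P = Y" using dv by (metis dvd_div_mult_self mult_1)
    have lin: "\<And>r. s (act (infinite_arc a) r (1, 0)) = act (finite_arc a b) r (P, Q)"
      using hs one sP unfolding gmod_hom_def by metis
    have "s (0, 0) = (0, P)" using lin[of "(0, 1)"] unfolding actM actN rmult_def by simp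
    moreover have "s (0, 0) = (0, 0)" using lin[of "(0, 0)"] unfolding actM actN rmult_def by simp
    ultimately show False using PY Ynz by simp
  qed
  show ?thesis using ses nsplit by blast
qed

end
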